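(* Let $U\colon[0,1]^2\to[0,1]$ be a uninorm with neutral element $e\in(0,1)$. Define $U^*,U_*\colon[0,1]^2\to[0,1]$ by $U^*(x,y)=1$ if $\max(x,y)=1$, $U^*(x,y)=0$ if $\min(x,y)=0$ and $\max(x,y)<1$, and $U^*(x,y)=U(x,y)$ otherwise; and $U_*(x,y)=0$ if $\min(x,y)=0$, $U_*(x,y)=1$ if $\min(x,y)>0$ and $\max(x,y)=1$, and $U_*(x,y)=U(x,y)$ otherwise. Then $U^*$ and $U_*$ are both uninorms if and only if there are no $x_1,x_2\in(0,1)$ with $U(x_1,x_2)\in\{0,1\}$.
   Context: A uninorm is a binary operation on $[0,1]$ that is commutative, associative, non-decreasing in each variable and has a neutral element $e$. *)

theory Defs
  imports Main "HOL.Real"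
begin

definition uninorm :: "(real \<Rightarrow> real \<Rightarrow> real) \<Rightarrow> real \<Rightarrow> bool" where
  "uninorm U e \<longleftrightarrow>
     e \<in> {0..1} \<and>
     (\<forall>x\<in>{0..1}. \<forall>y\<in>{0..1}. U x y \<in> {0..1}) \<and>
     (\<forall>x\<in>{0..1}. \<forall>y\<in>{0..1}. U x y = U y x) \<and>
     (\<forall>x\<in>{0..1}. \<forall>y\<in>{0..1}. \<forall>z\<in>{0..1}. U (U x y) z = U x (U y z)) \<and>
     (\<forall>x\<in>{0..1}. \<forall>y\<in>{0..1}. \<forall>z\<in>{0..1}. x \<le> y \<longrightarrow> U x z \<le> U y z \<and> U z x \<le> U z y) \<and>
     (\<forall>x\<in>{0..1}. U e x = x \<and> U x e = x)"

definition upper_mod :: "(real \<Rightarrow> real \<Rightarrow> real) \<Rightarrow> real \<Rightarrow> real \<Rightarrow> real" where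
  "upper_mod U x y =
     (if max x y = 1 then 1
      else if min x y = 0 \<and> max x y < 1 then 0
      else U x y)"

definition lower_mod :: "(real \<Rightarrow> real \<Rightarrow> real) \<Rightarrow> real \<Rightarrow> real \<Rightarrow> real" where
  "lower_mod U x y =
     (if min x y = 0 then 0
      else if min x y > 0 \<and> max x y = 1 then 1
      else U x y)"

end

theory Submission
  imports Defs
begin

lemma up1: "max x y = 1 \<Longrightarrow> upper_mod U x y = 1" by (simp add: upper_mod_def max_def min_def)
lemma up0: "max x y < 1 \<Longrightarrow> min x y = 0 \<Longrightarrow> upper_mod U x y = 0" by (simp add: upper_mod_def max_def min_def)
lemma upI: "0 < x \<Longrightarrow> x < 1 \<Longrightarrow> 0 < y \<Longrightarrow> y < 1 \<Longrightarrow> upper_mod U x y = U x y"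
  by (simp add: upper_mod_def max_def min_def)
lemma lo0: "min x y = 0 \<Longrightarrow> lower_mod U x y = 0" by (simp add: lower_mod_def max_def min_def)
lemma lo1: "min x y > 0 \<Longrightarrow> max x y = 1 \<Longrightarrow> lower_mod U x y = 1" by (simp add: lower_mod_def max_def min_def)
lemma loI: "0 < x \<Longrightarrow> x < 1 \<Longrightarrow> 0 < y \<Longrightarrow> y < 1 \<Longrightarrow> lower_mod U x y = U x y"
  by (simp add: lower_mod_def max_def min_def)

lemma upper_ok:
  assumes u: "uninorm U e" and e: "0 < e" "e < 1"
    and H: "\<And>x y. 0 < x \<Longrightarrow> x < 1 \<Longrightarrow> 0 < y \<Longrightarrow> y < 1 \<Longrightarrow> 0 < U x y \<and> U x y < 1"
  shows "uninorm (upper_mod U) e"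
proof -
  have rng: "\<And>x y. x\<in>{0..1} \<Longrightarrow> y\<in>{0..1} \<Longrightarrow> U x y \<in> {0..1}"
   and com: "\<And>x y. x\<in>{0..1} \<Longrightarrow> y\<in>{0..1} \<Longrightarrow> U x y = U y x"
   and ass: "\<And>x y z. x\<in>{0..1} \<Longrightarrow> y\<in>{0..1} \<Longrightarrow> z\<in>{0..1} \<Longrightarrow> U (U x y) z = U x (U y z)"
   and mon: "\<And>x y z. x\<in>{0..1} \<Longrightarrow> y\<in>{0..1} \<Longrightarrow> z\<in>{0..1} \<Longrightarrow> x \<le> y \<Longrightarrow> U x z \<le> U y z"
   and neu: "\<And>x. x\<in>{0..1} \<Longrightarrow> U e x = x \<and> U x e = x"
    using u unfolding uninorm_def by blast+
  have R: "upper_mod U x y \<in> {0..1}" if "x\<in>{0..1}" "y\<in>{0..1}" for x y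
    using that rng[OF that] by (auto simp: upper_mod_def max_def min_def)
  have R': "upper_mod U x y < 1" if "x\<in>{0..1}" "y\<in>{0..1}" "x < 1" "y < 1" for x y
    using that H[of x y] by (auto simp: upper_mod_def max_def min_def)
  have C: "upper_mod U x y = upper_mod U y x" if "x\<in>{0..1}" "y\<in>{0..1}" for x y
    using that com[OF that] by (auto simp: upper_mod_def max_def min_def max.commute min.commute)
  have M: "upper_mod U x z \<le> upper_mod U y z" if hyp: "x\<in>{0..1}" "y\<in>{0..1}" "z\<in>{0..1}" "x \<le> y" for x y z
  proof -
    consider "y = 1 \<or> z = 1" | "y < 1" "z < 1" "x = 0 \<or> z = 0" | "0<x" "x<1" "0<y" "y<1" "0<z" "z<1"
      using hyp by fastforce
    then show ?thesis
    proof cases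
      case 1 then show ?thesis using that R[of x z] by (auto simp: upper_mod_def max_def min_def)
    next
      case 2 then show ?thesis using that R[of y z] by (auto simp: upper_mod_def max_def min_def)
    next
      case 3 then show ?thesis using mon[OF that] by (simp add: upI)
    qed
  qed
  have A: "upper_mod U (upper_mod U x y) z = upper_mod U x (upper_mod U y z)"
    if hyp: "x\<in>{0..1}" "y\<in>{0..1}" "z\<in>{0..1}" for x y z
  proof -
    consider "x = 1 \<or> y = 1 \<or> z = 1" | "x < 1" "y < 1" "z < 1" "x = 0 \<or> y = 0 \<or> z = 0"
      | "0<x" "x<1" "0<y" "y<1" "0<z" "z<1"
      using hyp by fastforce
    then show ?thesis
    proof cases
      case 1 then show ?thesis using that R[of x y] R[of y z] by (auto simp: upper_mod_def max_def min_def)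
    next
      case 2
      have a: "upper_mod U x y \<in> {0..1}" "upper_mod U x y < 1" using R R' hyp 2 by auto
      have b: "upper_mod U y z \<in> {0..1}" "upper_mod U y z < 1" using R R' hyp 2 by auto
      show ?thesis
      proof (cases "x = 0 \<or> y = 0")
        case True
        then have "upper_mod U x y = 0" using 2 hyp by (intro up0) auto
        moreover have "upper_mod U x (upper_mod U y z) = 0"
        proof (cases "x = 0")
          case True then show ?thesis using a b 2 by (intro up0) auto
        next
          case False then have "y = 0" using \<open>x = 0 \<or> y = 0\<close> by simp
          then have "upper_mod U y z = 0" using 2 hyp by (intro up0) auto
          then show ?thesis using 2 hyp by (auto intro: up0)
        qed
        ultimately show ?thesis using 2 hyp by (auto intro: up0)
      next
        case False then have z: "z = 0" using 2 by simp
        have "upper_mod U y z = 0" using 2 hyp z by (intro up0) auto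
        moreover have "upper_mod U (upper_mod U x y) 0 = 0" using a by (intro up0) auto
        moreover have "upper_mod U x 0 = 0" using 2 hyp by (intro up0) auto
        ultimately show ?thesis using z by simp
      qed
    next
      case 3
      have "0 < U x y" "U x y < 1" "0 < U y z" "U y z < 1" using H 3 by auto
      then show ?thesis using 3 ass[OF that] by (simp add: upI)
    qed
  qed
  have N: "upper_mod U e x = x \<and> upper_mod U x e = x" if "x\<in>{0..1}" for x
    using that e neu[OF that] by (auto simp: upper_mod_def max_def min_def)
  show ?thesis unfolding uninorm_def using e R C M A N
    by (auto intro: C[symmetric, THEN ord_eq_le_trans] simp: C)
qed

lemma lower_ok:
  assumes u: "uninorm U e" and e: "0 < e" "e < 1"
    and H: "\<And>x y. 0 < x \<Longrightarrow> x < 1 \<Longrightarrow> 0 < y \<Longrightarrow> y < 1 \<Longrightarrow> 0 < U x y \<and> U x y < 1"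
  shows "uninorm (lower_mod U) e"
proof -
  have rng: "\<And>x y. x\<in>{0..1} \<Longrightarrow> y\<in>{0..1} \<Longrightarrow> U x y \<in> {0..1}"
   and com: "\<And>x y. x\<in>{0..1} \<Longrightarrow> y\<in>{0..1} \<Longrightarrow> U x y = U y x"
   and ass: "\<And>x y z. x\<in>{0..1} \<Longrightarrow> y\<in>{0..1} \<Longrightarrow> z\<in>{0..1} \<Longrightarrow> U (U x y) z = U x (U y z)"
   and mon: "\<And>x y z. x\<in>{0..1} \<Longrightarrow> y\<in>{0..1} \<Longrightarrow> z\<in>{0..1} \<Longrightarrow> x \<le> y \<Longrightarrow> U x z \<le> U y z"
   and neu: "\<And>x. x\<in>{0..1} \<Longrightarrow> U e x = x \<and> U x e = x"
    using u unfolding uninorm_def by blast+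
  have R: "lower_mod U x y \<in> {0..1}" if "x\<in>{0..1}" "y\<in>{0..1}" for x y
    using that rng[OF that] by (auto simp: lower_mod_def max_def min_def)
  have R': "lower_mod U x y > 0" if "x\<in>{0..1}" "y\<in>{0..1}" "x > 0" "y > 0" for x y
    using that H[of x y] by (auto simp: lower_mod_def max_def min_def)
  have C: "lower_mod U x y = lower_mod U y x" if "x\<in>{0..1}" "y\<in>{0..1}" for x y
    using that com[OF that] by (auto simp: lower_mod_def max_def min_def max.commute min.commute)
  have M: "lower_mod U x z \<le> lower_mod U y z" if hyp: "x\<in>{0..1}" "y\<in>{0..1}" "z\<in>{0..1}" "x \<le> y" for x y z
  proof -
    consider "x = 0 \<or> z = 0" | "0 < x" "0 < z" "y = 1 \<or> z = 1" | "0<x" "x<1" "0<y" "y<1" "0<z" "z<1"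
      using hyp by fastforce
    then show ?thesis
    proof cases
      case 1 then have "lower_mod U x z = 0" using hyp by (intro lo0) (auto simp: min_def)
      then show ?thesis using hyp R[of y z] by auto
    next
      case 2 then have "lower_mod U y z = 1" using hyp by (intro lo1) auto
      then show ?thesis using hyp R[of x z] by auto
    next
      case 3 then show ?thesis using mon[OF hyp] by (simp add: loI)
    qed
  qed
  have A: "lower_mod U (lower_mod U x y) z = lower_mod U x (lower_mod U y z)"
    if hyp: "x\<in>{0..1}" "y\<in>{0..1}" "z\<in>{0..1}" for x y z
  proof -
    consider "x = 0 \<or> y = 0 \<or> z = 0" | "0 < x" "0 < y" "0 < z" "x = 1 \<or> y = 1 \<or> z = 1"
      | "0<x" "x<1" "0<y" "y<1" "0<z" "z<1"
      using hyp by fastforce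
    then show ?thesis
    proof cases
      case 1
      have a: "lower_mod U x y \<in> {0..1}" "lower_mod U y z \<in> {0..1}" using R hyp by auto
      show ?thesis
      proof (cases "x = 0 \<or> y = 0")
        case True
        then have "lower_mod U x y = 0" using hyp by (intro lo0) (auto simp: min_def)
        moreover have "lower_mod U x (lower_mod U y z) = 0"
        proof (cases "x = 0")
          case True then show ?thesis using a hyp by (intro lo0) (auto simp: min_def)
        next
          case False then have "y = 0" using \<open>x = 0 \<or> y = 0\<close> by simp
          then have "lower_mod U y z = 0" using hyp by (intro lo0) (auto simp: min_def)
          then show ?thesis using hyp by (intro lo0) (auto simp: min_def)
        qed
        moreover have "lower_mod U 0 z = 0" using hyp by (intro lo0) (auto simp: min_def)
        ultimately show ?thesis by simp
      next
        case False then have z: "z = 0" using 1 by simp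
        have "lower_mod U y z = 0" using z hyp by (intro lo0) (auto simp: min_def)
        moreover have "lower_mod U (lower_mod U x y) 0 = 0" using a by (intro lo0) (auto simp: min_def)
        moreover have "lower_mod U x 0 = 0" using hyp by (intro lo0) (auto simp: min_def)
        ultimately show ?thesis using z by simp
      qed
    next
      case 2
      have a: "lower_mod U x y \<in> {0..1}" "lower_mod U x y > 0" using R R' hyp 2 by auto
      have b: "lower_mod U y z \<in> {0..1}" "lower_mod U y z > 0" using R R' hyp 2 by auto
      show ?thesis
      proof (cases "x = 1 \<or> y = 1")
        case True
        then have "lower_mod U x y = 1" using 2 hyp by (intro lo1) (auto simp: min_def max_def)
        moreover have "lower_mod U x (lower_mod U y z) = 1"
        proof (cases "x = 1")
          case True then show ?thesis using b 2 by (intro lo1) (auto simp: min_def max_def)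
        next
          case False then have "y = 1" using \<open>x = 1 \<or> y = 1\<close> by simp
          then have "lower_mod U y z = 1" using 2 hyp by (intro lo1) (auto simp: min_def max_def)
          then show ?thesis using 2 hyp by (intro lo1) (auto simp: min_def max_def)
        qed
        moreover have "lower_mod U 1 z = 1" using 2 hyp by (intro lo1) (auto simp: min_def max_def)
        ultimately show ?thesis by simp
      next
        case False then have z: "z = 1" using 2 by simp
        have "lower_mod U y z = 1" using z 2 hyp by (intro lo1) (auto simp: min_def max_def)
        moreover have "lower_mod U (lower_mod U x y) 1 = 1" using a by (intro lo1) (auto simp: min_def max_def)
        moreover have "lower_mod U x 1 = 1" using 2 hyp by (intro lo1) (auto simp: min_def max_def)
        ultimately show ?thesis using z by simp
      qed
    next
      case 3
      have "0 < U x y" "U x y < 1" "0 < U y z" "U y z < 1" using H 3 by auto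
      then show ?thesis using 3 ass[OF hyp] by (simp add: loI)
    qed
  qed
  have N: "lower_mod U e x = x \<and> lower_mod U x e = x" if "x\<in>{0..1}" for x
    using that e neu[OF that] by (auto simp: lower_mod_def max_def min_def)
  show ?thesis unfolding uninorm_def using e R C M A N
    by (auto intro: C[symmetric, THEN ord_eq_le_trans] simp: C)
qed

theorem lemma2:
  fixes U :: "real \<Rightarrow> real \<Rightarrow> real" and e :: real
  assumes "uninorm U e" and "0 < e" and "e < 1"
  shows "((\<exists>e'. uninorm (upper_mod U) e') \<and> (\<exists>e'. uninorm (lower_mod U) e')) \<longleftrightarrow>
         \<not> (\<exists>x1\<in>{0<..<1}. \<exists>x2\<in>{0<..<1}. U x1 x2 \<in> {0, 1})"
proof
  assume "(\<exists>e'. uninorm (upper_mod U) e') \<and> (\<exists>e'. uninorm (lower_mod U) e')"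
  then obtain e1 e2 where u1: "uninorm (upper_mod U) e1" and u2: "uninorm (lower_mod U) e2" by blast
  have as1: "\<And>x y z. x\<in>{0..1} \<Longrightarrow> y\<in>{0..1} \<Longrightarrow> z\<in>{0..1} \<Longrightarrow>
     upper_mod U (upper_mod U x y) z = upper_mod U x (upper_mod U y z)"
    using u1 unfolding uninorm_def by blast
  have as2: "\<And>x y z. x\<in>{0..1} \<Longrightarrow> y\<in>{0..1} \<Longrightarrow> z\<in>{0..1} \<Longrightarrow>
     lower_mod U (lower_mod U x y) z = lower_mod U x (lower_mod U y z)"
    using u2 unfolding uninorm_def by blast
  show "\<not> (\<exists>x1\<in>{0<..<1}. \<exists>x2\<in>{0<..<1}. U x1 x2 \<in> {0, 1})"
  proof
    assume "\<exists>x1\<in>{0<..<1}. \<exists>x2\<in>{0<..<1}. U x1 x2 \<in> {0, 1}"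
    then obtain x y where x: "0 < x" "x < 1" and y: "0 < y" "y < 1" and v: "U x y = 0 \<or> U x y = 1"
      by auto
    show False using v
    proof
      assume h: "U x y = 0"
      have "lower_mod U x y = 0" using x y h by (simp add: loI)
      moreover have "lower_mod U 0 1 = 0" by (simp add: lo0)
      moreover have "lower_mod U y 1 = 1" using y by (intro lo1) (auto simp: min_def max_def)
      moreover have "lower_mod U x 1 = 1" using x by (intro lo1) (auto simp: min_def max_def)
      ultimately show False using as2[of x y 1] x y by simp
    next
      assume h: "U x y = 1"
      have "upper_mod U x y = 1" using x y h by (simp add: upI)
      moreover have "upper_mod U 1 0 = 1" by (simp add: up1)
      moreover have "upper_mod U y 0 = 0" using y by (intro up0) (auto simp: min_def max_def)
      moreover have "upper_mod U x 0 = 0" using x by (intro up0) (auto simp: min_def max_def)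
      ultimately show False using as1[of x y 0] x y by simp
    qed
  qed
next
  assume n: "\<not> (\<exists>x1\<in>{0<..<1}. \<exists>x2\<in>{0<..<1}. U x1 x2 \<in> {0, 1})"
  have H: "0 < U x y \<and> U x y < 1" if "0 < x" "x < 1" "0 < y" "y < 1" for x y
  proof -
    have "U x y \<in> {0..1}" using assms(1) that unfolding uninorm_def by auto
    moreover have "U x y \<noteq> 0" "U x y \<noteq> 1" using n that by auto
    ultimately show ?thesis by auto
  qed
  show "(\<exists>e'. uninorm (upper_mod U) e') \<and> (\<exists>e'. uninorm (lower_mod U) e')"
    using upper_ok[OF assms H] lower_ok[OF assms H] by blast
qed

end
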